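(* Let $c\in(0,1)$ and $t\in\mathbb{N}$. There exist $n_0$ and $C>0$ depending on $c$ and $t$ such that for all $n\ge n_0$: if $\mathcal{F}\subseteq\mathcal{M}_{2n}$ is a $t$-intersecting family with $|\mathcal{F}|\ge c(2(n-t)-1)!!$, then there is a set $T$ of $t$ pairwise disjoint edges of $K_{2n}$ such that \[|\mathcal{F}\setminus\mathcal{F}\!\downarrow_T| \le C\,(2(n-t-1)-1)!!,\] i.e. $|\mathcal{F}\setminus\mathcal{F}\!\downarrow_T| = O((2(n-t-1)-1)!!)$.
   Context: $\mathcal{M}_{2n}$ is the set of perfect matchings of $K_{2n}$. A family $\mathcal{F}$ is $t$-intersecting if $|m\cap m'|\ge t$ for all $m,m'\in\mathcal{F}$. For a set $S$ of disjoint edges, $\mathcal{F}\!\downarrow_S=\{m\in\mathcal{F}: S\subseteq m\}$. $(2k-1)!!=1\cdot3\cdots(2k-1)$. *)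

theory Defs
  imports Complex_Main "HOL-Library.Disjoint_Sets"
begin

definition edges_K :: "nat \<Rightarrow> nat set set" where
  "edges_K n = {e. e \<subseteq> {0..<2*n} \<and> card e = 2}"

definition disjoint_edges :: "nat \<Rightarrow> nat set set \<Rightarrow> bool" where
  "disjoint_edges n S \<longleftrightarrow> S \<subseteq> edges_K n \<and> disjoint S"

definition perfect_matchings :: "nat \<Rightarrow> nat set set set" where
  "perfect_matchings n = {m. disjoint_edges n m \<and> \<Union>m = {0..<2*n}}"

definition t_intersecting :: "nat \<Rightarrow> nat set set set \<Rightarrow> bool" where
  "t_intersecting t F \<longleftrightarrow> (\<forall>m\<in>F. \<forall>m'\<in>F. card (m \<inter> m') \<ge> t)"

definition restrict_fam :: "nat set set set \<Rightarrow> nat set set \<Rightarrow> nat set set set" where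
  "restrict_fam F S = {m\<in>F. S \<subseteq> m}"

text \<open>odd_dfact k = (2k-1)!! = 1*3*...*(2k-1); odd_dfact 0 = (-1)!! = 1.\<close>
definition odd_dfact :: "nat \<Rightarrow> nat" where
  "odd_dfact k = (\<Prod>i<k. 2*i+1)"

end

theory Submission
  imports Defs "HOL-Real_Asymp.Real_Asymp" "HOL-Library.Discrete_Functions"
begin
definition pmV :: "nat set \<Rightarrow> nat set set set" where
  "pmV V = {m. (\<forall>e\<in>m. e \<subseteq> V \<and> card e = 2) \<and> disjoint m \<and> \<Union>m = V}"

lemma odd_dfact_Suc: "odd_dfact (Suc k) = (2*k+1) * odd_dfact k"
  by (simp add: odd_dfact_def)

lemma finite_pmV: "finite V \<Longrightarrow> finite (pmV V)"
  by (rule finite_subset[of _ "Pow (Pow V)"]) (auto simp: pmV_def)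

lemma pmV_step:
  assumes m: "m \<in> pmV V" and v: "v \<in> V"
  shows "\<exists>w\<in>V-{v}. m = insert {v,w} (m - {{v,w}}) \<and> m - {{v,w}} \<in> pmV (V - {v,w})"
proof -
  from m v obtain e where e: "e \<in> m" "v \<in> e" unfolding pmV_def by auto
  from m e have eV: "e \<subseteq> V" and ce: "card e = 2" unfolding pmV_def by auto
  from ce obtain x y where xy: "e = {x,y}" "x \<noteq> y" by (auto simp: card_2_iff)
  then obtain w where ew: "e = {v,w}" "w \<noteq> v" using e(2) by auto
  have wV: "w \<in> V-{v}" using eV ew by auto
  have dis: "disjoint m" using m by (simp add: pmV_def)
  have sub: "e' \<subseteq> V - {v,w}" if "e' \<in> m - {e}" for e'
  proof -
    have "disjnt e' e" using dis that e(1) by (auto simp: pairwise_def)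
    moreover have "e' \<subseteq> V" using m that by (auto simp: pmV_def)
    ultimately show ?thesis using ew by (auto simp: disjnt_def)
  qed
  have un: "\<Union>(m - {e}) = V - {v,w}"
  proof
    show "\<Union>(m - {e}) \<subseteq> V - {v, w}" using sub by blast
    show "V - {v, w} \<subseteq> \<Union>(m - {e})"
    proof
      fix x assume x: "x \<in> V - {v,w}"
      then have "x \<in> \<Union>m" using m by (auto simp: pmV_def)
      then obtain e'' where "e'' \<in> m" "x \<in> e''" by auto
      moreover have "e'' \<noteq> e" using x ew \<open>x \<in> e''\<close> by auto
      ultimately show "x \<in> \<Union>(m - {e})" by auto
    qed
  qed
  have "m - {e} \<in> pmV (V - {v,w})"
    unfolding pmV_def using sub un m pairwise_subset[OF dis, of "m - {e}"] by (auto simp: pmV_def)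
  moreover have "m = insert e (m - {e})" using e by auto
  ultimately show ?thesis using wV ew by auto
qed

lemma card_pmV: "finite V \<Longrightarrow> card V = 2*k \<Longrightarrow> card (pmV V) \<le> odd_dfact k"
proof (induction k arbitrary: V)
  case 0
  then have "V = {}" by auto
  then have "pmV V \<subseteq> {{}}" unfolding pmV_def by auto
  then have "card (pmV V) \<le> card {{}::nat set set}" by (intro card_mono) auto
  then show ?case by (simp add: odd_dfact_def)
next
  case (Suc k)
  then obtain v where v: "v \<in> V" by fastforce
  let ?A = "SIGMA w:V-{v}. pmV (V-{v,w})"
  have "pmV V \<subseteq> (\<lambda>(w,m'). insert {v,w} m') ` ?A"
  proof
    fix m assume "m \<in> pmV V"
    from pmV_step[OF this v] obtain w where "w\<in>V-{v}" "m = insert {v,w} (m - {{v,w}})"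
      "m - {{v,w}} \<in> pmV (V - {v,w})" by blast
    then show "m \<in> (\<lambda>(w,m'). insert {v,w} m') ` ?A" by (auto intro!: image_eqI[where x="(w, m - {{v,w}})"])
  qed
  moreover have finA: "finite ?A" using Suc.prems by (auto intro!: finite_SigmaI finite_pmV)
  ultimately have "card (pmV V) \<le> card ?A"
    by (meson card_image_le card_mono finite_imageI order_trans)
  also have "card ?A = (\<Sum>w\<in>V-{v}. card (pmV (V-{v,w})))"
    using Suc.prems by (intro card_SigmaI) (auto intro!: finite_pmV)
  also have "\<dots> \<le> (\<Sum>w\<in>V-{v}. odd_dfact k)"
  proof (rule sum_mono)
    fix w assume w: "w \<in> V - {v}"
    have "card (V - {v,w}) = 2*k" using Suc.prems v w by (simp add: card_Diff_subset)
    then show "card (pmV (V-{v,w})) \<le> odd_dfact k" using Suc.IH Suc.prems by simp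
  qed
  also have "\<dots> = (2*k+1) * odd_dfact k" using Suc.prems v by simp
  finally show ?case by (simp add: odd_dfact_Suc)
qed


lemma finite_edges: "finite (edges_K n)"
  by (rule finite_subset[of _ "Pow {0..<2*n}"]) (auto simp: edges_K_def)

lemma finite_pm: "finite (perfect_matchings n)"
  by (rule finite_subset[of _ "Pow (edges_K n)"])
     (auto simp: perfect_matchings_def disjoint_edges_def intro: finite_edges)

lemma pm_sub_edges: "m \<in> perfect_matchings n \<Longrightarrow> m \<subseteq> edges_K n"
  by (auto simp: perfect_matchings_def disjoint_edges_def)

lemma pm_disjoint: "m \<in> perfect_matchings n \<Longrightarrow> disjoint m"
  by (auto simp: perfect_matchings_def disjoint_edges_def)

lemma pm_finite: "m \<in> perfect_matchings n \<Longrightarrow> finite m"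
  using pm_sub_edges finite_edges finite_subset by blast

lemma card_Union_edges:
  assumes "S \<subseteq> edges_K n" "disjoint S"
  shows "card (\<Union>S) = 2 * card S"
proof -
  have "card (\<Union>S) = sum card S"
    using assms by (intro card_Union_disjoint) (auto simp: edges_K_def intro: finite_subset)
  also have "\<dots> = sum (\<lambda>_. 2) S"
    using assms by (intro sum.cong) (auto simp: edges_K_def)
  finally show ?thesis by simp
qed

lemma pm_card: assumes "m \<in> perfect_matchings n" shows "card m = n"
proof -
  have "card (\<Union>m) = 2 * card m"
    using assms by (intro card_Union_edges) (auto simp: perfect_matchings_def disjoint_edges_def)
  moreover have "\<Union>m = {0..<2*n}" using assms by (simp add: perfect_matchings_def)
  ultimately show ?thesis by simp
qed

lemma count_star:
  assumes m0: "m0 \<in> perfect_matchings n" and S: "S \<subseteq> m0"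
  shows "card {m \<in> perfect_matchings n. S \<subseteq> m} \<le> odd_dfact (n - card S)"
proof -
  let ?W = "{0..<2*n} - \<Union>S"
  have Se: "S \<subseteq> edges_K n" using S pm_sub_edges[OF m0] by auto
  have Sd: "disjoint S" using pairwise_subset[OF pm_disjoint[OF m0] S] .
  have cU: "card (\<Union>S) = 2 * card S" using card_Union_edges[OF Se Sd] .
  have US: "\<Union>S \<subseteq> {0..<2*n}" using Se by (auto simp: edges_K_def)
  have cW: "card ?W = 2 * (n - card S)"
    using cU US by (simp add: card_Diff_subset finite_subset)
  have "(\<lambda>m. m - S) ` {m \<in> perfect_matchings n. S \<subseteq> m} \<subseteq> pmV ?W"
  proof
    fix x assume "x \<in> (\<lambda>m. m - S) ` {m \<in> perfect_matchings n. S \<subseteq> m}"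
    then obtain m where m: "m \<in> perfect_matchings n" "S \<subseteq> m" and x: "x = m - S" by auto
    have dm: "disjoint m" using pm_disjoint[OF m(1)] .
    have em: "m \<subseteq> edges_K n" using pm_sub_edges[OF m(1)] .
    have sub: "e \<subseteq> ?W \<and> card e = 2" if "e \<in> m - S" for e
    proof -
      have "disjnt e s" if "s \<in> S" for s
      proof -
        have "e \<noteq> s" using \<open>e \<in> m - S\<close> that by auto
        then show ?thesis using dm \<open>e \<in> m - S\<close> that m(2) unfolding pairwise_def by blast
      qed
      then show ?thesis using em \<open>e \<in> m - S\<close> by (auto simp: edges_K_def disjnt_def)
    qed
    have un: "\<Union>(m - S) = ?W"
    proof
      show "\<Union>(m - S) \<subseteq> ?W" using sub by blast
      show "?W \<subseteq> \<Union>(m - S)"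
      proof
        fix y assume y: "y \<in> ?W"
        then have "y \<in> \<Union>m" using m(1) by (auto simp: perfect_matchings_def)
        then obtain e where "e \<in> m" "y \<in> e" by auto
        moreover have "e \<notin> S" using y \<open>y \<in> e\<close> by auto
        ultimately show "y \<in> \<Union>(m - S)" by auto
      qed
    qed
    show "x \<in> pmV ?W" unfolding x pmV_def
      using sub un pairwise_subset[OF dm, of "m - S"] by auto
  qed
  moreover have "inj_on (\<lambda>m. m - S) {m \<in> perfect_matchings n. S \<subseteq> m}"
  proof (rule inj_onI)
    fix x y assume "x \<in> {m \<in> perfect_matchings n. S \<subseteq> m}" "y \<in> {m \<in> perfect_matchings n. S \<subseteq> m}"
      "x - S = y - S"
    then have "x = (x - S) \<union> S" "y = (y - S) \<union> S" by auto
    then show "x = y" using \<open>x - S = y - S\<close> by metis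
  qed
  ultimately have "card {m \<in> perfect_matchings n. S \<subseteq> m} \<le> card (pmV ?W)"
    using card_inj_on_le[of "\<lambda>m. m - S" "{m \<in> perfect_matchings n. S \<subseteq> m}" "pmV ?W"]
      finite_pmV[of ?W] by auto
  also have "\<dots> \<le> odd_dfact (n - card S)" using card_pmV cW by simp
  finally show ?thesis .
qed

definition spread :: "real \<Rightarrow> nat set set \<Rightarrow> nat set set set \<Rightarrow> bool" where
  "spread r S G \<longleftrightarrow> (\<forall>e. e \<notin> S \<longrightarrow> r * real (card {g\<in>G. e \<in> g}) \<le> real (card G))"

lemma double_count:
  assumes "G \<subseteq> perfect_matchings n"
  shows "(\<Sum>e\<in>edges_K n. card {g\<in>G. e \<in> g}) = n * card G"
proof -
  have fG: "finite G" using assms finite_pm finite_subset by blast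
  have "(\<Sum>e\<in>edges_K n. card {g\<in>G. e \<in> g}) = (\<Sum>e\<in>edges_K n. \<Sum>g\<in>G. if e \<in> g then 1 else 0)"
    using fG by (intro sum.cong refl) (simp add: sum.If_cases Int_def)
  also have "\<dots> = (\<Sum>g\<in>G. \<Sum>e\<in>edges_K n. if e \<in> g then 1 else 0)" by (rule sum.swap)
  also have "\<dots> = (\<Sum>g\<in>G. n)"
  proof (intro sum.cong refl)
    fix g assume g: "g \<in> G"
    have "g \<subseteq> edges_K n" using g assms pm_sub_edges by blast
    then have "edges_K n \<inter> g = g" by blast
    then show "(\<Sum>e\<in>edges_K n. if e \<in> g then 1 else 0) = n"
      using pm_card[of g n] g assms finite_edges by (auto simp: sum.If_cases)
  qed
  finally show ?thesis by simp
qed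

lemma pair_lemma:
  assumes G1: "G1 \<subseteq> perfect_matchings n" and G2: "G2 \<subseteq> perfect_matchings n"
    and ne1: "G1 \<noteq> {}" and ne2: "G2 \<noteq> {}"
    and sp1: "spread r S1 G1" and sp2: "spread r S2 G2"
    and fS2: "finite S2" and rb: "real n + real (card S2) < r"
  shows "\<exists>g1\<in>G1. \<exists>g2\<in>G2. g1 \<inter> g2 \<subseteq> S1 \<inter> S2"
proof (rule ccontr)
  assume "\<not> ?thesis"
  then have bad: "\<forall>g1\<in>G1. \<forall>g2\<in>G2. \<exists>e. e \<in> g1 \<and> e \<in> g2 \<and> e \<notin> S1 \<inter> S2" by blast
  let ?E = "edges_K n"
  let ?D1 = "\<lambda>e. {g\<in>G1. e \<in> g}" and ?D2 = "\<lambda>e. {g\<in>G2. e \<in> g}"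
  have fG1: "finite G1" using G1 finite_pm finite_subset by blast
  have fG2: "finite G2" using G2 finite_pm finite_subset by blast
  have r0: "r > 0" using rb by (smt (verit) of_nat_0_le_iff)
  have "G1 \<times> G2 \<subseteq> (\<Union>e\<in>?E - S2. ?D1 e \<times> ?D2 e) \<union> (\<Union>e\<in>S2 - S1. ?D1 e \<times> G2)"
  proof
    fix p assume "p \<in> G1 \<times> G2"
    then obtain g1 g2 where p: "p = (g1,g2)" "g1 \<in> G1" "g2 \<in> G2" by auto
    then obtain e where e: "e \<in> g1" "e \<in> g2" "e \<notin> S1 \<inter> S2" using bad by blast
    have "e \<in> ?E" using e(1) p(2) G1 pm_sub_edges by blast
    then show "p \<in> (\<Union>e\<in>?E - S2. ?D1 e \<times> ?D2 e) \<union> (\<Union>e\<in>S2 - S1. ?D1 e \<times> G2)"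
      using e p by (cases "e \<in> S2") auto
  qed
  then have "card (G1 \<times> G2) \<le> card ((\<Union>e\<in>?E - S2. ?D1 e \<times> ?D2 e) \<union> (\<Union>e\<in>S2 - S1. ?D1 e \<times> G2))"
    using fG1 fG2 by (intro card_mono[OF finite_subset[of _ "G1 \<times> G2"]]) auto
  also have "\<dots> \<le> card (\<Union>e\<in>?E - S2. ?D1 e \<times> ?D2 e) + card (\<Union>e\<in>S2 - S1. ?D1 e \<times> G2)"
    by (rule card_Un_le)
  also have "\<dots> \<le> (\<Sum>e\<in>?E - S2. card (?D1 e \<times> ?D2 e)) + (\<Sum>e\<in>S2 - S1. card (?D1 e \<times> G2))"
    using finite_edges fS2 by (intro add_mono card_UN_le) auto
  finally have c1: "real (card G1 * card G2) \<le>
     (\<Sum>e\<in>?E - S2. real (card (?D1 e)) * real (card (?D2 e))) + (\<Sum>e\<in>S2 - S1. real (card (?D1 e)) * real (card G2))"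
    by (simp add: card_cartesian_product flip: of_nat_mult of_nat_add of_nat_sum)
  have s1: "r * (\<Sum>e\<in>?E - S2. real (card (?D1 e)) * real (card (?D2 e))) \<le> real n * real (card G1) * real (card G2)"
  proof -
    have "r * (\<Sum>e\<in>?E - S2. real (card (?D1 e)) * real (card (?D2 e)))
        = (\<Sum>e\<in>?E - S2. real (card (?D1 e)) * (r * real (card (?D2 e))))"
      by (simp add: sum_distrib_left algebra_simps)
    also have "\<dots> \<le> (\<Sum>e\<in>?E - S2. real (card (?D1 e)) * real (card G2))"
      using sp2 by (intro sum_mono mult_left_mono) (auto simp: spread_def)
    also have "\<dots> \<le> (\<Sum>e\<in>?E. real (card (?D1 e)) * real (card G2))"
      using finite_edges by (intro sum_mono2) auto
    also have "\<dots> = real (\<Sum>e\<in>?E. card (?D1 e)) * real (card G2)"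
      by (simp add: sum_distrib_right)
    also have "\<dots> = real n * real (card G1) * real (card G2)"
      using double_count[OF G1] by simp
    finally show ?thesis .
  qed
  have s2: "r * (\<Sum>e\<in>S2 - S1. real (card (?D1 e)) * real (card G2)) \<le> real (card S2) * real (card G1) * real (card G2)"
  proof -
    have "r * (\<Sum>e\<in>S2 - S1. real (card (?D1 e)) * real (card G2))
        = (\<Sum>e\<in>S2 - S1. (r * real (card (?D1 e))) * real (card G2))"
      by (simp add: sum_distrib_left algebra_simps)
    also have "\<dots> \<le> (\<Sum>e\<in>S2 - S1. real (card G1) * real (card G2))"
      using sp1 by (intro sum_mono mult_right_mono) (auto simp: spread_def)
    also have "\<dots> = real (card (S2 - S1)) * real (card G1) * real (card G2)" by simp
    also have "\<dots> \<le> real (card S2) * real (card G1) * real (card G2)"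
      using fS2 by (intro mult_right_mono) (auto intro: card_mono)
    finally show ?thesis .
  qed
  have "r * real (card G1 * card G2) \<le> (real n + real (card S2)) * (real (card G1) * real (card G2))"
    using mult_left_mono[OF c1, of r] r0 s1 s2 by (simp add: algebra_simps)
  moreover have "real (card G1) * real (card G2) > 0"
    using ne1 ne2 fG1 fG2 by (simp add: card_gt_0_iff)
  ultimately show False using rb
    by (smt (verit, ccfv_SIG) mult_strict_right_mono of_nat_mult)
qed



definition good :: "nat set set set \<Rightarrow> nat \<Rightarrow> real \<Rightarrow> nat set set \<Rightarrow> nat set set set \<Rightarrow> bool" where
  "good H q r S G \<longleftrightarrow> G \<subseteq> H \<and> G \<noteq> {} \<and> card S \<le> q \<and> finite S \<and> (\<forall>g\<in>G. S \<subseteq> g) \<and> spread r S G"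

lemma good_mono: "good H q r S G \<Longrightarrow> H \<subseteq> H' \<Longrightarrow> good H' q r S G"
  unfolding good_def by blast

lemma decomp:
  assumes H: "H \<subseteq> perfect_matchings n" and r0: "r > 0"
    and th: "r ^ (q+1) * real (odd_dfact (n - (q+1))) \<le> \<theta>" and th0: "\<theta> \<ge> 0"
  shows "\<exists>SS. (\<forall>p\<in>SS. good H q r (fst p) (snd p))
     \<and> real (card {m\<in>H. \<forall>p\<in>SS. \<not> fst p \<subseteq> m}) \<le> \<theta>"
  using H
proof (induction "card H" arbitrary: H rule: less_induct)
  case less
  have fH: "finite H" using finite_subset[OF less.prems finite_pm] .
  show ?case
  proof (cases "real (card H) \<le> \<theta>")
    case True
    have "{m\<in>H. \<forall>p\<in>{}. \<not> fst p \<subseteq> m} = H" by simp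
    then show ?thesis using True by (intro exI[of _ "{}"]) simp
  next
    case False
    define A where "A = {S. S \<subseteq> edges_K n \<and> card S \<le> q+1}"
    define phi where "phi = (\<lambda>S. r ^ card S * real (card (restrict_fam H S)))"
    have AP: "A \<subseteq> Pow (edges_K n)" unfolding A_def by blast
    have fA: "finite A" using finite_subset[OF AP] finite_edges by simp
    have eA: "{} \<in> A" unfolding A_def by simp
    define M where "M = Max (phi ` A)"
    have "M \<in> phi ` A" unfolding M_def using fA eA by (intro Max_in) auto
    then obtain S where SA: "S \<in> A" and SM: "phi S = M" by blast
    have Smax: "phi S' \<le> phi S" if "S' \<in> A" for S'
      unfolding SM M_def using fA that by (intro Max_ge) auto
    have SE: "S \<subseteq> edges_K n" using SA unfolding A_def by blast
    have fS: "finite S" using finite_subset[OF SE finite_edges] .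
    have "phi {} = real (card H)" unfolding phi_def by (simp add: restrict_fam_def)
    moreover have "phi {} \<le> phi S" using Smax eA by blast
    ultimately have big: "phi S > \<theta>" using False by linarith
    define G where "G = restrict_fam H S"
    have Gne: "G \<noteq> {}"
    proof
      assume "G = {}" then have "phi S = 0" unfolding phi_def G_def by simp
      then show False using big th0 by simp
    qed
    then obtain m0 where m0: "m0 \<in> H" "S \<subseteq> m0" unfolding G_def restrict_fam_def by auto
    have cG: "card G \<le> odd_dfact (n - card S)"
    proof -
      have "G \<subseteq> {m \<in> perfect_matchings n. S \<subseteq> m}" using less.prems unfolding G_def restrict_fam_def by auto
      then have "card G \<le> card {m \<in> perfect_matchings n. S \<subseteq> m}"
        using finite_pm by (intro card_mono) auto
      also have "\<dots> \<le> odd_dfact (n - card S)" using count_star m0 less.prems by blast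
      finally show ?thesis .
    qed
    have Sq: "card S \<le> q"
    proof (rule ccontr)
      assume "\<not> card S \<le> q"
      then have cS: "card S = q+1" using SA unfolding A_def by auto
      have "real (card G) \<le> real (odd_dfact (n - (q+1)))" using cG cS by simp
      then have "phi S \<le> r ^ (q+1) * real (odd_dfact (n - (q+1)))"
        unfolding phi_def G_def[symmetric] cS using r0 by (intro mult_left_mono) auto
      then show False using big th by linarith
    qed
    have spr: "spread r S G"
      unfolding spread_def
    proof (intro allI impI)
      fix e assume eS: "e \<notin> S"
      show "r * real (card {g \<in> G. e \<in> g}) \<le> real (card G)"
      proof (cases "e \<in> edges_K n")
        case False
        have "{g \<in> G. e \<in> g} = {}"
          using False less.prems pm_sub_edges unfolding G_def restrict_fam_def by blast
        then have h0: "card {g \<in> G. e \<in> g} = 0" by (simp only: card.empty)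
        show ?thesis unfolding h0 by simp
      next
        case True
        have iA: "insert e S \<in> A" using True SA Sq fS eS unfolding A_def by auto
        have eq: "restrict_fam H (insert e S) = {g \<in> G. e \<in> g}" unfolding G_def restrict_fam_def by auto
        have cI: "card (insert e S) = Suc (card S)" using fS eS by simp
        have "phi (insert e S) \<le> phi S" using Smax iA by blast
        then have "r ^ card S * (r * real (card {g \<in> G. e \<in> g})) \<le> r ^ card S * real (card G)"
          unfolding phi_def eq cI G_def[symmetric] by (simp only: power_Suc mult.assoc mult.left_commute)
        then show ?thesis using r0 by (simp add: mult_le_cancel_left_pos)
      qed
    qed
    have sub: "H - G \<subseteq> perfect_matchings n" using less.prems by auto
    have lt: "card (H - G) < card H"
      using Gne fH unfolding G_def restrict_fam_def by (intro psubset_card_mono) auto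
    obtain SS where SS: "\<forall>p\<in>SS. good (H - G) q r (fst p) (snd p)"
      and rem: "real (card {m\<in>H - G. \<forall>p\<in>SS. \<not> fst p \<subseteq> m}) \<le> \<theta>"
      using less.hyps[OF lt sub] by blast
    define SS' where "SS' = insert (S, G) SS"
    have "{m\<in>H. \<forall>p\<in>SS'. \<not> fst p \<subseteq> m} \<subseteq> {m\<in>H - G. \<forall>p\<in>SS. \<not> fst p \<subseteq> m}"
      unfolding SS'_def G_def restrict_fam_def by auto
    then have "card {m\<in>H. \<forall>p\<in>SS'. \<not> fst p \<subseteq> m} \<le> card {m\<in>H - G. \<forall>p\<in>SS. \<not> fst p \<subseteq> m}"
      using fH by (intro card_mono) auto
    then have R: "real (card {m\<in>H. \<forall>p\<in>SS'. \<not> fst p \<subseteq> m}) \<le> \<theta>" using rem by linarith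
    have new: "good H q r S G"
      unfolding good_def using Gne Sq fS spr unfolding G_def restrict_fam_def by auto
    have old: "good H q r (fst p) (snd p)" if "p \<in> SS" for p
      using SS that good_mono[of "H - G"] by blast
    have "\<forall>p\<in>SS'. good H q r (fst p) (snd p)" unfolding SS'_def using new old by auto
    then show ?thesis using R by blast
  qed
qed

lemma asym:
  fixes c :: real and t :: nat
  assumes c: "c > 0"
  shows "\<exists>n0. \<forall>n\<ge>n0. 4 * (t + 4*(t+1)*(floor_log n + 2)) + 2 \<le> n \<and>
     1 + real (t + 4*(t+1)*(floor_log n + 2)) ^ (t+1) < c * real (2*(n-t-1)+1) \<and> t + 2 \<le> n"
proof -
  define Q where "Q = (\<lambda>x::real. real t + 4*(real t+1)*(log 2 x + 2))"
  have ev1: "eventually (\<lambda>x. 4 * Q x + 2 \<le> x) at_top" unfolding Q_def by real_asymp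
  have ev2: "eventually (\<lambda>x. 1 + Q x ^ (t+1) < c * (2*x - 2*real t - 1)) at_top"
    unfolding Q_def using c by real_asymp
  have ev3: "eventually (\<lambda>x. real t + 2 \<le> x) at_top" by real_asymp
  have "eventually (\<lambda>x. (4 * Q x + 2 \<le> x) \<and> (1 + Q x ^ (t+1) < c * (2*x - 2*real t - 1)) \<and> real t + 2 \<le> x) at_top"
    using ev1 ev2 ev3 by eventually_elim auto
  from eventually_compose_filterlim[OF this filterlim_real_sequentially]
  obtain n0 where n0: "\<And>n. n \<ge> n0 \<Longrightarrow> (4 * Q (real n) + 2 \<le> real n) \<and>
      (1 + Q (real n) ^ (t+1) < c * (2*real n - 2*real t - 1)) \<and> real t + 2 \<le> real n"
    unfolding eventually_sequentially by blast
  show ?thesis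
  proof (intro exI[of _ n0] allI impI)
    fix n assume n: "n \<ge> n0"
    note h = n0[OF n]
    have h1: "4 * Q (real n) + 2 \<le> real n" using h by blast
    have h2: "1 + Q (real n) ^ (t+1) < c * (2*real n - 2*real t - 1)" using h by blast
    have h3: "real t + 2 \<le> real n" using h by blast
    have n1: "n \<ge> 1" using h3 by linarith
    have fl: "real (floor_log n) \<le> log 2 (real n)"
    proof -
      have "log 2 (real n) \<ge> 0" using n1 by simp
      then show ?thesis using n1 by (simp add: floor_log_altdef)
    qed
    define qn where "qn = t + 4*(t+1)*(floor_log n + 2)"
    have qle: "real qn \<le> Q (real n)"
    proof -
      have "(4*(real t+1))*(real (floor_log n)+2) \<le> (4*(real t+1))*(log 2 (real n) + 2)"
        using fl by (intro mult_left_mono) auto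
      moreover have "real qn = real t + (4*(real t+1))*(real (floor_log n)+2)"
        unfolding qn_def by (simp add: algebra_simps)
      ultimately show ?thesis unfolding Q_def by linarith
    qed
    have "real (4 * qn + 2) \<le> real n" using qle h1 by simp
    then have A: "4 * qn + 2 \<le> n" by (simp only: of_nat_le_iff)
    have P: "real qn ^ (t+1) \<le> Q (real n) ^ (t+1)"
      using qle by (intro power_mono) auto
    have E: "real (2*(n-t-1)+1) = 2*real n - 2*real t - 1" using h3 by (simp add: of_nat_diff)
    have B: "1 + real qn ^ (t+1) < c * real (2*(n-t-1)+1)"
      unfolding E using h2 P by linarith
    have C: "t + 2 \<le> n" using h3 by linarith
    show "4 * (t + 4*(t+1)*(floor_log n + 2)) + 2 \<le> n \<and>
     1 + real (t + 4*(t+1)*(floor_log n + 2)) ^ (t+1) < c * real (2*(n-t-1)+1) \<and> t + 2 \<le> n"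
      using A B C unfolding qn_def by blast
  qed
qed


lemma odd_dfact_add: "odd_dfact (a + b) = odd_dfact a * (\<Prod>i<b. 2*(a+i)+1)"
  by (induction b) (simp_all add: odd_dfact_def algebra_simps)

lemma AR:
  fixes n q t L :: nat
  assumes h1: "4*q+2 \<le> n" and hq: "q = t + 4*(t+1)*L" and hL: "2*n \<le> 2^L"
  shows "(5*real n/4)^(q+1) * real (odd_dfact (n-(q+1))) \<le> real (odd_dfact (n-(t+1)))"
proof -
  define a where "a = n-(q+1)"
  define b where "b = q - t"
  have ab: "n-(t+1) = a + b" using h1 hq unfolding a_def b_def by simp
  have b4: "b = 4*(t+1)*L" using hq unfolding b_def by simp
  have fa: "3*real n/2 \<le> real (2*(a+i)+1)" for i
  proof -
    have "real a = real n - real q - 1" using h1 unfolding a_def by (simp add: of_nat_diff)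
    moreover have "real (4*q+2) \<le> real n" using h1 by (simp only: of_nat_le_iff)
    ultimately show ?thesis by simp
  qed
  have P: "(3*real n/2)^b \<le> real (\<Prod>i<b. 2*(a+i)+1)"
  proof -
    have "(3*real n/2)^b = (\<Prod>i<b. 3*real n/2)" by simp
    also have "\<dots> \<le> (\<Prod>i<b. real (2*(a+i)+1))"
      using fa by (intro prod_mono) auto
    also have "\<dots> = real (\<Prod>i<b. 2*(a+i)+1)" by simp
    finally show ?thesis .
  qed
  have key: "(5*real n/4)^(q+1) \<le> (3*real n/2)^b"
  proof -
    have q1: "q+1 = (t+1) + b" using hq b4 by simp
    have "(5*real n/4)^(t+1) \<le> (2 ^ L)^(t+1)"
    proof (intro power_mono)
      have "real (2*n) \<le> real ((2::nat)^L)" using hL by (simp only: of_nat_le_iff)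
      then show "5*real n/4 \<le> 2^L" by simp
    qed simp
    also have "\<dots> = (2::real) ^ ((t+1)*L)" by (simp only: power_mult[symmetric] mult.commute)
    also have "\<dots> \<le> ((6/5)^4) ^ ((t+1)*L)"
      by (intro power_mono) (auto simp: power_numeral_reduce)
    also have "\<dots> = (6/5)^b" unfolding b4 by (simp only: power_mult[symmetric] mult.assoc)
    finally have A: "(5*real n/4)^(t+1) \<le> (6/5)^b" .
    have "(5*real n/4)^(q+1) = (5*real n/4)^(t+1) * (5*real n/4)^b" unfolding q1 by (simp add: power_add)
    also have "\<dots> \<le> (6/5)^b * (5*real n/4)^b" using A by (intro mult_right_mono) auto
    also have "\<dots> = (6/5 * (5*real n/4))^b" by (rule power_mult_distrib[symmetric])
    also have "\<dots> = (3*real n/2)^b" by simp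
    finally show ?thesis .
  qed
  have "(5*real n/4)^(q+1) * real (odd_dfact (n-(q+1))) \<le> (3*real n/2)^b * real (odd_dfact a)"
    unfolding a_def using key by (intro mult_right_mono) auto
  also have "\<dots> \<le> real (\<Prod>i<b. 2*(a+i)+1) * real (odd_dfact a)"
    using P by (intro mult_right_mono) auto
  also have "\<dots> = real (odd_dfact (n-(t+1)))" unfolding ab odd_dfact_add by simp
  finally show ?thesis .
qed


theorem mainTheorem14:
  fixes c :: real and t :: nat
  assumes "0 < c" and "c < 1"
  shows "\<exists>n0::nat. \<exists>C::real. C > 0 \<and>
    (\<forall>n\<ge>n0. \<forall>F. F \<subseteq> perfect_matchings n \<and> t_intersecting t F
        \<and> real (card F) \<ge> c * real (odd_dfact (n - t))
      \<longrightarrow> (\<exists>T. disjoint_edges n T \<and> card T = t \<and>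
             real (card (F - restrict_fam F T)) \<le> C * real (odd_dfact (n - t - 1))))"
proof -
  obtain n0 where n0: "\<forall>n\<ge>n0. 4 * (t + 4*(t+1)*(floor_log n + 2)) + 2 \<le> n \<and>
     1 + real (t + 4*(t+1)*(floor_log n + 2)) ^ (t+1) < c * real (2*(n-t-1)+1) \<and> t + 2 \<le> n"
    using asym[OF assms(1), of t] by blast
  show ?thesis
  proof (intro exI[of _ n0] exI[of _ "1::real"] conjI allI impI)
    show "(0::real) < 1" by simp
    fix n F
    assume n: "n0 \<le> n"
      and hF: "F \<subseteq> perfect_matchings n \<and> t_intersecting t F \<and> c * real (odd_dfact (n - t)) \<le> real (card F)"
    have FP: "F \<subseteq> perfect_matchings n" and ti: "t_intersecting t F"
      and cF: "c * real (odd_dfact (n - t)) \<le> real (card F)" using hF by blast+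
    define L where "L = floor_log n + 2"
    define q where "q = t + 4*(t+1)*L"
    define r where "r = 5*real n/4"
    define \<theta> where "\<theta> = real (odd_dfact (n-t-1))"
    have nn: "4 * (t + 4*(t+1)*(floor_log n + 2)) + 2 \<le> n \<and>
     1 + real (t + 4*(t+1)*(floor_log n + 2)) ^ (t+1) < c * real (2*(n-t-1)+1) \<and> t + 2 \<le> n"
      using n0 n by blast
    have h1: "4*q+2 \<le> n" using nn unfolding q_def L_def by blast
    have h2: "1 + real q ^ (t+1) < c * real (2*(n-t-1)+1)" using nn unfolding q_def L_def by blast
    have h3: "t + 2 \<le> n" using nn by blast
    have hL: "2*n \<le> 2^L"
    proof -
      have "n < 2 * 2 ^ floor_log n" by (rule floor_log_exp2_gt)
      then show ?thesis unfolding L_def by (simp add: power_add)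
    qed
    have e1: "n - t - 1 = n - (t+1)" by simp
    have AR': "r^(q+1) * real (odd_dfact (n-(q+1))) \<le> \<theta>"
      using AR[OF h1 q_def hL] unfolding r_def \<theta>_def e1 .
    have r0: "r > 0" using h3 unfolding r_def by simp
    have th1: "\<theta> \<ge> 1" unfolding \<theta>_def odd_dfact_def
    proof -
      have "(\<Prod>i<n - t - 1. 2 * i + 1) > 0" by (intro prod_pos) auto
      then show "1 \<le> real (\<Prod>i<n - t - 1. 2 * i + 1)" by linarith
    qed
    have th0: "\<theta> \<ge> 0" using th1 by linarith
    have rb: "real n + real q < r" using h1 unfolding r_def by linarith
    obtain SS where SS: "\<forall>p\<in>SS. good F q r (fst p) (snd p)"
      and rem: "real (card {m\<in>F. \<forall>p\<in>SS. \<not> fst p \<subseteq> m}) \<le> \<theta>"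
      using decomp[OF FP r0 AR' th0] by blast
    have fF: "finite F" using finite_subset[OF FP finite_pm] .
    have inter: "t \<le> card (fst p1 \<inter> fst p2)" if "p1 \<in> SS" "p2 \<in> SS" for p1 p2
    proof -
      have p1: "snd p1 \<subseteq> F" "snd p1 \<noteq> {}" "finite (fst p1)" "spread r (fst p1) (snd p1)"
        using SS that(1) unfolding good_def by auto
      have p2: "snd p2 \<subseteq> F" "snd p2 \<noteq> {}" "finite (fst p2)" "spread r (fst p2) (snd p2)" "card (fst p2) \<le> q"
        using SS that(2) unfolding good_def by auto
      have "real n + real (card (fst p2)) < r" using rb p2(5) by linarith
      then obtain g1 g2 where g: "g1 \<in> snd p1" "g2 \<in> snd p2" "g1 \<inter> g2 \<subseteq> fst p1 \<inter> fst p2"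
        using pair_lemma[of "snd p1" n "snd p2" r "fst p1" "fst p2"] p1 p2 FP by blast
      have "t \<le> card (g1 \<inter> g2)" using ti g(1,2) p1(1) p2(1) unfolding t_intersecting_def by blast
      also have "\<dots> \<le> card (fst p1 \<inter> fst p2)" using g(3) p1(3) by (intro card_mono) auto
      finally show ?thesis .
    qed
    define Rem where "Rem = {m\<in>F. \<forall>p\<in>SS. \<not> fst p \<subseteq> m}"
    have RemF: "Rem \<subseteq> F" unfolding Rem_def by blast
    have remR: "real (card Rem) \<le> \<theta>" using rem unfolding Rem_def .
    have odd_t: "real (odd_dfact (n - t)) = real (2*(n-t-1)+1) * \<theta>"
    proof -
      have "n - t = Suc (n-t-1)" using h3 by simp
      then have "odd_dfact (n - t) = (2*(n-t-1)+1) * odd_dfact (n-t-1)" by (metis odd_dfact_Suc)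
      then show ?thesis unfolding \<theta>_def by (simp only: of_nat_mult)
    qed
    have big: "(1 + real q ^ (t+1)) * \<theta> < real (card F)"
    proof -
      have "(1 + real q ^ (t+1)) * \<theta> < c * real (2*(n-t-1)+1) * \<theta>"
        using h2 th1 by (intro mult_strict_right_mono) auto
      also have "\<dots> = c * real (odd_dfact (n - t))" using odd_t by simp
      finally show ?thesis using cF by linarith
    qed
    have qpos: "real q ^ (t+1) * \<theta> \<ge> 0" using th0 by simp
    have expd: "(1 + real q ^ (t+1)) * \<theta> = \<theta> + real q ^ (t+1) * \<theta>" by (simp add: algebra_simps)
    show "\<exists>T. disjoint_edges n T \<and> card T = t \<and> real (card (F - restrict_fam F T)) \<le> 1 * real (odd_dfact (n - t - 1))"
    proof (cases "SS = {}")
      case True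
      then have "Rem = F" unfolding Rem_def by auto
      then have "real (card F) \<le> \<theta>" using remR by simp
      then have False using big qpos expd by linarith
      then show ?thesis ..
    next
      case False
      then obtain p0 where p0: "p0 \<in> SS" by auto
      have pS0: "snd p0 \<subseteq> F" "snd p0 \<noteq> {}" "finite (fst p0)" "card (fst p0) \<le> q" "\<forall>g\<in>snd p0. fst p0 \<subseteq> g"
        using SS p0 unfolding good_def by auto
      define S0 where "S0 = fst p0"
      show ?thesis
      proof (cases "\<exists>R. R \<subseteq> S0 \<and> card R = t \<and> (\<forall>p\<in>SS. R \<subseteq> fst p)")
        case True
        then obtain R where R: "R \<subseteq> S0" "card R = t" "\<forall>p\<in>SS. R \<subseteq> fst p" by blast
        obtain g0 where g0: "g0 \<in> snd p0" using pS0(2) by auto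
        have g0P: "g0 \<in> perfect_matchings n" using g0 pS0(1) FP by auto
        have Rg0: "R \<subseteq> g0" using R(1) pS0(5) g0 unfolding S0_def by auto
        have de: "disjoint_edges n R"
          unfolding disjoint_edges_def
          using Rg0 pm_sub_edges[OF g0P] pairwise_subset[OF pm_disjoint[OF g0P] Rg0] by auto
        have "F - restrict_fam F R \<subseteq> Rem"
          using R(3) unfolding Rem_def restrict_fam_def by auto
        then have "card (F - restrict_fam F R) \<le> card Rem"
          using finite_subset[OF RemF fF] by (intro card_mono)
        then have "real (card (F - restrict_fam F R)) \<le> \<theta>" using remR by linarith
        then show ?thesis using de R(2) unfolding \<theta>_def by auto
      next
        case False
        then have nc: "\<forall>R. R \<subseteq> S0 \<and> card R = t \<longrightarrow> (\<exists>p. p \<in> SS \<and> \<not> R \<subseteq> fst p)" by blast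
        define SR where "SR = (\<lambda>R. fst (SOME p. p \<in> SS \<and> \<not> R \<subseteq> fst p))"
        have SR: "\<exists>p. p \<in> SS \<and> SR R = fst p \<and> \<not> R \<subseteq> SR R" if "R \<subseteq> S0" "card R = t" for R
        proof -
          have "\<exists>p. p \<in> SS \<and> \<not> R \<subseteq> fst p" using nc that by blast
          then have "(SOME p. p \<in> SS \<and> \<not> R \<subseteq> fst p) \<in> SS \<and> \<not> R \<subseteq> fst (SOME p. p \<in> SS \<and> \<not> R \<subseteq> fst p)"
            by (rule someI_ex)
          then show ?thesis unfolding SR_def by blast
        qed
        define RR where "RR = {R. R \<subseteq> S0 \<and> card R = t}"
        have fS0: "finite S0" using pS0(3) unfolding S0_def .
        have fRR: "finite RR" unfolding RR_def using fS0 by simp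
        have SRp: "\<exists>p. p \<in> SS \<and> SR R = fst p \<and> \<not> R \<subseteq> SR R" if "R \<in> RR" for R
          using SR that unfolding RR_def by blast
        have cov: "F - Rem \<subseteq> (\<Union>R\<in>RR. \<Union>e\<in>SR R - R. restrict_fam F (insert e R))"
        proof
          fix m assume m: "m \<in> F - Rem"
          then obtain p where SG: "p \<in> SS" "fst p \<subseteq> m" unfolding Rem_def by auto
          define S where "S = fst p"
          have "t \<le> card (S \<inter> S0)" using inter[OF SG(1) p0] unfolding S_def S0_def .
          then obtain R where R: "R \<subseteq> S \<inter> S0" "card R = t" using obtain_subset_with_card_n by metis
          have RRR: "R \<in> RR" using R unfolding RR_def by auto
          obtain p' where p': "p' \<in> SS" "SR R = fst p'" "\<not> R \<subseteq> SR R" using SRp[OF RRR] by blast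
          have fS: "finite S" using SS SG(1) unfolding good_def S_def by auto
          have ti2: "t \<le> card (S \<inter> SR R)" using inter[OF SG(1) p'(1)] unfolding S_def p'(2) .
          have "\<exists>e. e \<in> S \<inter> SR R \<and> e \<notin> R"
          proof (rule ccontr)
            assume "\<not> ?thesis"
            then have sub1: "S \<inter> SR R \<subseteq> R \<inter> SR R" by auto
            have fR: "finite R" using finite_subset[OF _ fS] R(1) by blast
            have "card (S \<inter> SR R) \<le> card (R \<inter> SR R)"
              using sub1 fR by (intro card_mono) auto
            moreover have "R \<inter> SR R \<subset> R" using p'(3) by blast
            then have "card (R \<inter> SR R) < card R"
              using fR by (intro psubset_card_mono)
            ultimately show False using ti2 R(2) by linarith
          qed
          then obtain e where e: "e \<in> S" "e \<in> SR R" "e \<notin> R" by auto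
          have "insert e R \<subseteq> m" using e R(1) SG(2) unfolding S_def by auto
          then have "m \<in> restrict_fam F (insert e R)" using m unfolding restrict_fam_def by auto
          then show "m \<in> (\<Union>R\<in>RR. \<Union>e\<in>SR R - R. restrict_fam F (insert e R))"
            using RRR e by blast
        qed
        have each: "card (restrict_fam F (insert e R)) \<le> odd_dfact (n-t-1)"
          if "R \<in> RR" "e \<in> SR R - R" for R e
        proof (cases "restrict_fam F (insert e R) = {}")
          case True then show ?thesis by simp
        next
          case False
          then obtain m0 where m0: "m0 \<in> F" "insert e R \<subseteq> m0" unfolding restrict_fam_def by auto
          have RS0: "R \<subseteq> S0" "card R = t" using that(1) unfolding RR_def by auto
          have fR: "finite R" using finite_subset[OF RS0(1) fS0] .
          have cR: "card (insert e R) = t+1" using that(2) fR RS0(2) by simp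
          have m0P: "m0 \<in> perfect_matchings n" using m0(1) FP by blast
          have "restrict_fam F (insert e R) \<subseteq> {m \<in> perfect_matchings n. insert e R \<subseteq> m}"
            using FP unfolding restrict_fam_def by blast
          then have "card (restrict_fam F (insert e R)) \<le> card {m \<in> perfect_matchings n. insert e R \<subseteq> m}"
            using finite_pm by (intro card_mono) auto
          also have "\<dots> \<le> odd_dfact (n - card (insert e R))" using count_star[OF m0P m0(2)] .
          also have "\<dots> = odd_dfact (n-t-1)" unfolding cR by simp
          finally show ?thesis .
        qed
        have cSR: "card (SR R - R) \<le> q" and fSR: "finite (SR R - R)" if RRin: "R \<in> RR" for R
        proof -
          obtain p where p: "p \<in> SS" "SR R = fst p" using SRp[OF RRin] by blast
          then have "card (SR R) \<le> q" "finite (SR R)" using SS unfolding good_def by auto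
          then show "card (SR R - R) \<le> q" "finite (SR R - R)"
            using card_mono[of "SR R" "SR R - R"] by auto
        qed
        have tS0: "t \<le> card S0" using inter[OF p0 p0] unfolding S0_def by simp
        have cRR: "card RR \<le> q ^ t"
        proof -
          have "card RR = card S0 choose t" unfolding RR_def using n_subsets[OF fS0] by simp
          also have "\<dots> \<le> card S0 ^ t" using tS0 by (rule binomial_le_pow)
          also have "\<dots> \<le> q ^ t" using pS0(4) unfolding S0_def by (intro power_mono) auto
          finally show ?thesis .
        qed
        have finU: "finite (\<Union>R\<in>RR. \<Union>e\<in>SR R - R. restrict_fam F (insert e R))"
          by (rule finite_subset[OF _ fF]) (auto simp: restrict_fam_def)
        have "card (F - Rem) \<le> card (\<Union>R\<in>RR. \<Union>e\<in>SR R - R. restrict_fam F (insert e R))"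
          using cov finU by (rule card_mono[rotated])
        also have "\<dots> \<le> (\<Sum>R\<in>RR. card (\<Union>e\<in>SR R - R. restrict_fam F (insert e R)))"
          using fRR by (rule card_UN_le)
        also have "\<dots> \<le> (\<Sum>R\<in>RR. \<Sum>e\<in>SR R - R. card (restrict_fam F (insert e R)))"
          using fSR by (intro sum_mono card_UN_le) auto
        also have "\<dots> \<le> (\<Sum>R\<in>RR. \<Sum>e\<in>SR R - R. odd_dfact (n-t-1))"
          using each by (intro sum_mono) auto
        also have "\<dots> \<le> (\<Sum>R\<in>RR. q * odd_dfact (n-t-1))"
          using cSR by (intro sum_mono) simp
        also have "\<dots> = card RR * q * odd_dfact (n-t-1)" by simp
        also have "\<dots> \<le> q ^ t * q * odd_dfact (n-t-1)"
          using cRR by (intro mult_right_mono) auto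
        finally have c1: "card (F - Rem) \<le> q ^ (t+1) * odd_dfact (n-t-1)" by (simp add: mult.commute)
        have cFR: "card F = card (F - Rem) + card Rem"
          using card_Diff_subset[OF finite_subset[OF RemF fF] RemF] card_mono[OF fF RemF] by simp
        have "real (card (F - Rem)) \<le> real q ^ (t+1) * \<theta>"
          using c1 unfolding \<theta>_def by (metis of_nat_le_iff of_nat_mult of_nat_power)
        then have "real (card F) \<le> real q ^ (t+1) * \<theta> + \<theta>"
          using remR cFR by simp
        then have False using big expd by linarith
        then show ?thesis ..
      qed
    qed
  qed
qed

end
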